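(* Consider a single individual with initial wealth $x>0$ who holds all wealth in cash, in a market with $\mu=r=0$ (so investment in the stock is of no benefit and the optimal stock holding is zero), so that wealth evolves by $\frac{\mathrm d x_t}{\mathrm d t}=-\gamma_t$, $x_0=x$, where $\gamma_t\ge 0$ is the consumption rate and $x_t\ge 0$ is required. The individual's death time $\tau$ is exponentially distributed with constant intensity $\lambda>0$, and the individual has exponential Kihlstrom--Mirman preferences with zero discount rate, i.e. seeks to maximize $\mathbb E\big[-\exp\big(-\int_0^\tau u(\gamma_t)\,\mathrm dt\big)\big]$, where $u(y)=a\,y^k+c$ for $y\ge 0$, with constants $a>0$, $0<k<1$, $c$, and $c+\lambda>0$. Let $\hat v(x)$ denote the value function (the supremum of this objective) as a function of initial wealth. Then $\hat v(x)$ satisfies the implicit equation $$x=(1-k)^{1-\frac1k}\,a^{-1/k}\,\lambda^{-1/k}\,(c+\lambda)^{\frac1k-1}\,\big(\hat v(c+\lambda)+\lambda\big)^{1/k}\;{}_2F_1\!\Big(\tfrac1k,\tfrac1k;1+\tfrac1k;\tfrac{\lambda+\hat v(c+\lambda)}{\lambda}\Big),$$ and, setting $w_0:=c\,\hat v(x)+\lambda+\lambda\,\hat v(x)$, the optimal consumption rate at time $t\ge0$ is $$\gamma^*_t=(1-k)^{-1/k}a^{-1/k}\lambda^{-1/k}(c+\lambda)^{1/k}\Big(w_0e^{\frac{kt(c+\lambda)}{k-1}}\Big)^{1/k}\Big(1-\frac{w_0e^{\frac{kt(c+\lambda)}{k-1}}}{\lambda}\Big)^{-1/k}.$$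
   Context: ${}_2F_1$ denotes the Gauss hypergeometric function. The value at zero wealth is $\hat v(0)=-\lambda/(c+\lambda)$ (consumption is then identically zero). *)

theory Defs
  imports "HOL-Probability.Probability"
begin

definition hyp2F1 :: "real \<Rightarrow> real \<Rightarrow> real \<Rightarrow> real \<Rightarrow> real" where
  "hyp2F1 a b c z =
     (\<Sum>n. pochhammer a n * pochhammer b n / (pochhammer c n * fact n) * z ^ n)"

definition util :: "real \<Rightarrow> real \<Rightarrow> real \<Rightarrow> real \<Rightarrow> real" where
  "util a k c y = a * y powr k + c"

definition admissible :: "real \<Rightarrow> (real \<Rightarrow> real) \<Rightarrow> bool" where
  "admissible x \<gamma> \<longleftrightarrow>
     \<gamma> \<in> borel_measurable borel \<and>
     (\<forall>t\<ge>0. \<gamma> t \<ge> 0) \<and>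
     (\<forall>t\<ge>0. set_integrable lborel {0..t} \<gamma>) \<and>
     (\<forall>t\<ge>0. x - (LBINT s=0..t. \<gamma> s) \<ge> 0)"

definition objective :: "real \<Rightarrow> real \<Rightarrow> real \<Rightarrow> real \<Rightarrow> (real \<Rightarrow> real) \<Rightarrow> real" where
  "objective a k c l \<gamma> =
     integral\<^sup>L (density lborel (exponential_density l))
       (\<lambda>s. - exp (- (LBINT t=0..s. util a k c (\<gamma> t))))"

definition vhat :: "real \<Rightarrow> real \<Rightarrow> real \<Rightarrow> real \<Rightarrow> real \<Rightarrow> real" where
  "vhat a k c l x = (SUP \<gamma> \<in> {\<gamma>. admissible x \<gamma>}. objective a k c l \<gamma>)"

end

theory Submission
  imports Defs
begin

lemma aux2: fixes P F b n :: real assumes "P>0" "F>0" "b>0" "n\<ge>0"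
  shows "P*P/((P*(b+n)/b)*F) = b*(P/F)/(b+n)"
proof -
  have "P*P/((P*(b+n)/b)*F) = (P * (b*P)) / (P * ((b+n)*F))" using assms by (simp add: field_simps)
  also have "\<dots> = b*P/((b+n)*F)" using assms by (subst mult_divide_mult_cancel_left) auto
  finally show ?thesis by simp
qed

definition cf :: "real \<Rightarrow> nat \<Rightarrow> real" where
  "cf b n = pochhammer b n * pochhammer b n / (pochhammer (1+b) n * fact n)"

lemma cf_eq:
  assumes "b > 0"
  shows "cf b n = b * (pochhammer b n / fact n) / (b + real n)"
proof -
  have "pochhammer b (Suc n) = b * pochhammer (1+b) n"
    by (simp add: pochhammer_rec add.commute)
  moreover have "pochhammer b (Suc n) = pochhammer b n * (b + real n)"
    by (simp add: pochhammer_Suc)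
  ultimately have e: "pochhammer (1+b) n = pochhammer b n * (b + real n) / b"
    using assms by (simp add: field_simps)
  have p: "pochhammer b n > 0" using assms by (simp add: pochhammer_pos)
  have f: "(fact n :: real) > 0" by simp
  show ?thesis unfolding cf_def e using aux2[OF p f assms, of "real n"] by simp
qed

lemma cf_nonneg: "b > 0 \<Longrightarrow> cf b n \<ge> 0"
  by (simp add: cf_def pochhammer_pos less_imp_le)

lemma binom_sums:
  fixes z b :: real
  assumes "\<bar>z\<bar> < 1"
  shows "(\<lambda>n. pochhammer b n / fact n * z^n) sums (1 - z) powr (- b)"
proof -
  have "(\<lambda>n. ((-b) gchoose n) * (-z)^n) sums (1 + (-z)) powr (-b)"
    using assms by (intro gen_binomial_real) simp
  moreover have "((-b) gchoose n) * (-z)^n = pochhammer b n / fact n * z^n" for n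
  proof -
    have "((-b) gchoose n) * (-z)^n = ((-1)^n * (-1)^n) * (pochhammer b n / fact n * z^n)"
      by (simp add: gbinomial_pochhammer power_minus[of z])
    also have "(-1::real)^n * (-1)^n = 1" by (simp flip: power_add)
    finally show ?thesis by simp
  qed
  ultimately show ?thesis by simp
qed

lemma cf_summable:
  assumes "b > 0" "\<bar>z\<bar> < 1"
  shows "summable (\<lambda>n. cf b n * z^n)"
proof (rule summable_comparison_test)
  show "summable (\<lambda>n. pochhammer b n / fact n * \<bar>z\<bar>^n)"
    using binom_sums[of "\<bar>z\<bar>" b] assms by (simp add: sums_summable)
  show "\<exists>N. \<forall>n\<ge>N. norm (cf b n * z ^ n) \<le> pochhammer b n / fact n * \<bar>z\<bar> ^ n"
  proof (intro exI allI impI)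
    fix n :: nat
    have p: "pochhammer b n / fact n \<ge> 0" using assms by (simp add: pochhammer_pos less_imp_le)
    have p2: "real n * pochhammer b n \<ge> 0" "b * fact n + fact n * real n > 0"
      using assms by (simp_all add: pochhammer_pos less_imp_le add_pos_nonneg)
    have "cf b n \<le> pochhammer b n / fact n"
      unfolding cf_eq[OF assms(1)] using p p2 assms
      by (simp add: divide_le_eq mult_left_mono algebra_simps)
    then have "cf b n * \<bar>z\<bar>^n \<le> pochhammer b n / fact n * \<bar>z\<bar>^n"
      by (rule mult_right_mono) simp
    then show "norm (cf b n * z ^ n) \<le> pochhammer b n / fact n * \<bar>z\<bar> ^ n"
      using cf_nonneg[OF assms(1), of n]
      by (simp add: abs_mult power_abs)
  qed
qed

definition Fh :: "real \<Rightarrow> real \<Rightarrow> real" where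
  "Fh b z = (\<Sum>n. cf b n * z^n)"

lemma Fh_hyp: "hyp2F1 b b (1+b) z = Fh b z"
  unfolding hyp2F1_def Fh_def cf_def by simp

definition Fd :: "real \<Rightarrow> real \<Rightarrow> real" where
  "Fd b z = (\<Sum>n. diffs (cf b) n * z^n)"

lemma Fh_deriv:
  assumes "b > 0" "\<bar>z\<bar> < 1"
  shows "(Fh b has_real_derivative Fd b z) (at z)"
  unfolding Fh_def[abs_def] Fd_def
  by (rule termdiffs_strong'[where K=1]) (use assms cf_summable in auto)

lemma Fh_key:
  assumes "b > 0" "\<bar>z\<bar> < 1"
  shows "b * Fh b z + z * Fd b z = b * (1 - z) powr (- b)"
proof -
  have S1: "(\<lambda>n. cf b n * z^n) sums Fh b z"
    unfolding Fh_def using cf_summable[OF assms] by (simp add: summable_sums)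
  have "summable (\<lambda>n. diffs (cf b) n * z^n)"
    by (rule termdiff_converges[where K=1]) (use assms cf_summable in auto)
  then have S2: "(\<lambda>n. diffs (cf b) n * z^n) sums Fd b z"
    unfolding Fd_def by (simp add: summable_sums)
  define g where "g m = real m * cf b m * z^m" for m
  have "(\<lambda>n. g (Suc n)) = (\<lambda>n. z * (diffs (cf b) n * z^n))"
    by (simp add: g_def diffs_def fun_eq_iff algebra_simps)
  then have "(\<lambda>n. g (Suc n)) sums (z * Fd b z)"
    using sums_mult[OF S2, of z] by simp
  then have "g sums (z * Fd b z + g 0)"
    by (simp only: sums_Suc_iff)
  then have S3: "g sums (z * Fd b z)"
    by (simp add: g_def)
  have "(\<lambda>n. b * (cf b n * z^n) + g n) sums (b * Fh b z + z * Fd b z)"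
    by (intro sums_add sums_mult S1 S3)
  moreover have "(\<lambda>n. b * (cf b n * z^n) + g n) = (\<lambda>n. b * (pochhammer b n / fact n * z^n))"
  proof
    fix n
    have "b + real n > 0" using assms by simp
    then have h: "(b + real n) * cf b n = b * (pochhammer b n / fact n)"
      unfolding cf_eq[OF assms(1)] by simp
    have "b * (cf b n * z^n) + g n = ((b + real n) * cf b n) * z^n"
      by (simp add: g_def algebra_simps)
    also have "\<dots> = b * (pochhammer b n / fact n * z^n)" using h by simp
    finally show "b * (cf b n * z^n) + g n = b * (pochhammer b n / fact n * z^n)" .
  qed
  ultimately have "(\<lambda>n. b * (pochhammer b n / fact n * z^n)) sums (b * Fh b z + z * Fd b z)"
    by simp
  moreover have "(\<lambda>n. b * (pochhammer b n / fact n * z^n)) sums (b * (1 - z) powr (- b))"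
    by (intro sums_mult binom_sums) (use assms in simp)
  ultimately show ?thesis by (metis sums_unique2)
qed

definition Phi :: "real \<Rightarrow> real \<Rightarrow> real" where
  "Phi b z = z powr b * Fh b z"

lemma Phi_deriv:
  assumes "b > 0" "0 < z" "z < 1"
  shows "(Phi b has_real_derivative b * z powr (b - 1) * (1 - z) powr (- b)) (at z)"
proof -
  have d: "(Phi b has_real_derivative (b * z powr (b - 1) * Fh b z + z powr b * Fd b z)) (at z)"
    unfolding Phi_def[abs_def]
    by (rule derivative_eq_intros Fh_deriv refl | use assms in simp)+
  have "b * z powr (b - 1) * Fh b z + z powr b * Fd b z
        = z powr (b - 1) * (b * Fh b z + z * Fd b z)"
    using assms by (simp add: powr_diff field_simps)
  also have "\<dots> = b * z powr (b - 1) * (1 - z) powr (- b)"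
    using Fh_key[of b z] assms by simp
  finally show ?thesis using d by simp
qed


lemma Fh_0: "Fh b 0 = 1"
proof -
  have "Fh b 0 = cf b 0" unfolding Fh_def by (rule powser_zero)
  then show ?thesis by (simp add: cf_def)
qed

lemma Fh_isCont: "b > 0 \<Longrightarrow> \<bar>z\<bar> < 1 \<Longrightarrow> isCont (Fh b) z"
  using Fh_deriv by (blast intro: DERIV_isCont)

lemma Phi_tendsto0:
  assumes "b > 0" "(f \<longlongrightarrow> 0) F" "eventually (\<lambda>x. 0 \<le> f x) F"
  shows "((\<lambda>x. Phi b (f x)) \<longlongrightarrow> 0) F"
proof -
  have "((\<lambda>x. f x powr b) \<longlongrightarrow> 0) F"
    by (rule tendsto_zero_powrI[OF assms(2) tendsto_const assms(3) assms(1)])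
  moreover have "((\<lambda>x. Fh b (f x)) \<longlongrightarrow> Fh b 0) F"
    by (rule isCont_tendsto_compose[OF Fh_isCont assms(2)]) (use assms in auto)
  ultimately have "((\<lambda>x. f x powr b * Fh b (f x)) \<longlongrightarrow> 0 * Fh b 0) F"
    by (rule tendsto_mult)
  then show ?thesis by (simp add: Phi_def)
qed

lemma Phi_cont:
  assumes "b > 0" "0 < p" "q < 1"
  shows "continuous_on {p..q} (Phi b)"
proof (rule continuous_at_imp_continuous_on, intro ballI)
  fix z assume "z \<in> {p..q}"
  then have "0 < z" "z < 1" using assms by auto
  then show "isCont (Phi b) z" using assms(1) by (intro DERIV_isCont[OF Phi_deriv])
qed

lemma poch_ge_fact: "b \<ge> 1 \<Longrightarrow> pochhammer b n \<ge> (fact n :: real)"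
proof (induction n)
  case (Suc n)
  have "0 \<le> pochhammer b n" using Suc by (meson fact_ge_zero order_trans)
  then have "fact n * (1 + real n) \<le> pochhammer b n * (b + real n)"
    using Suc by (intro mult_mono) auto
  moreover have "fact (Suc n) = fact n * (1 + real n)" by (simp add: algebra_simps)
  ultimately show ?case by (simp add: pochhammer_Suc mult.commute)
qed simp

lemma cf_lower: "b \<ge> 1 \<Longrightarrow> cf b n \<ge> 1 / (1 + real n)"
proof -
  assume b: "b \<ge> 1"
  have "1 / (1 + real n) \<le> b / (b + real n)"
    using b mult_right_mono[OF b, of "real n"] by (simp add: field_simps)
  also have "\<dots> \<le> b * (pochhammer b n / fact n) / (b + real n)"
    using poch_ge_fact[OF b, of n] b by (intro divide_right_mono) (auto simp: field_simps)
  finally show ?thesis using cf_eq[of b n] b by simp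
qed

lemma Fh_lower:
  assumes "b \<ge> 1" "0 < z" "z < 1"
  shows "Fh b z \<ge> z ^ N * harm N"
proof -
  have "z ^ N * harm N = (\<Sum>n<N. z^N / (1 + real n))"
    by (simp add: harm_altdef sum_distrib_left field_simps)
  also have "\<dots> \<le> (\<Sum>n<N. cf b n * z^n)"
  proof (rule sum_mono)
    fix n assume "n \<in> {..<N}"
    then have "z^N \<le> z^n" using assms by (intro power_decreasing) auto
    then have "z^N / (1 + real n) \<le> z^n / (1 + real n)" by (simp add: divide_right_mono)
    also have "\<dots> = 1 / (1 + real n) * z^n" by simp
    also have "\<dots> \<le> cf b n * z^n"
      using cf_lower[OF assms(1), of n] assms by (intro mult_right_mono) auto
    finally show "z^N / (1 + real n) \<le> cf b n * z^n" .
  qed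
  also have "\<dots> \<le> Fh b z"
    unfolding Fh_def
    by (rule sum_le_suminf) (use assms cf_summable cf_nonneg in auto)
  finally show ?thesis .
qed

lemma Phi_unbounded:
  assumes "b \<ge> 1"
  shows "\<exists>z. 0 < z \<and> z < 1 \<and> Phi b z > M"
proof -
  define q :: real where "q = (1/2) powr b"
  have q: "q > 0" by (simp add: q_def)
  define L where "L = 2 * \<bar>M\<bar> / q + 1"
  define N where "N = Suc (nat \<lceil>exp L\<rceil>)"
  have "exp L \<le> of_int \<lceil>exp L\<rceil>" by (rule le_of_int_ceiling)
  then have ceil1: "0 < 1 + real_of_int \<lceil>exp L\<rceil>" using exp_gt_zero[of L] by linarith
  then have ceil0: "0 < 1 + real_of_int \<lceil>exp L\<rceil>" "0 < 2 + real_of_int \<lceil>exp L\<rceil>" by simp_all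
  have "L = ln (exp L)" by simp
  also have "\<dots> \<le> ln (real N + 1)"
    by (subst ln_le_cancel_iff) (use ceil0 in \<open>auto simp: N_def intro: order_trans[OF le_of_int_ceiling]\<close>)
  also have "\<dots> \<le> harm N" by (rule ln_le_harm)
  finally have hN: "L \<le> harm N" .
  define z where "z = (1/2::real) powr (1 / real N)"
  have N0: "real N > 0" by (simp add: N_def del: of_nat_Suc)
  have z0: "0 < z" by (simp add: z_def)
  have z1: "z < 1" unfolding z_def using N0 powr_less_mono2[of "1/real N" "1/2" 1] by simp
  have zN: "z ^ N = 1/2"
    unfolding z_def using N0 by (simp add: powr_realpow[symmetric] powr_powr)
  have zh: "z \<ge> 1/2"
  proof -
    have "z ^ N \<le> z ^ 1" using z0 z1 N0 by (intro power_decreasing) auto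
    then show ?thesis using zN by simp
  qed
  have "q * (1/2) * L = \<bar>M\<bar> + q/2" unfolding L_def using q by (simp add: field_simps)
  then have "M < q * (1/2) * L" using q abs_ge_self[of M] by linarith
  also have "\<dots> \<le> q * (1/2 * harm N)"
    using q hN by simp
  also have "\<dots> \<le> z powr b * Fh b z"
  proof (rule mult_mono)
    show "q \<le> z powr b" unfolding q_def using zh assms by (intro powr_mono2) auto
    show "1/2 * harm N \<le> Fh b z" using Fh_lower[OF assms z0 z1, of N] zN by simp
    show "0 \<le> z powr b" by simp
    show "0 \<le> 1/2 * (harm N :: real)" by (simp add: harm_nonneg)
  qed
  finally show ?thesis using z0 z1 by (auto simp: Phi_def)
qed

lemma Phi_surj:
  assumes "b \<ge> 1" "y > 0"
  shows "\<exists>z. 0 < z \<and> z < 1 \<and> Phi b z = y"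
proof -
  obtain z1 where z1: "0 < z1" "z1 < 1" "Phi b z1 > y"
    using Phi_unbounded[OF assms(1)] by blast
  have "((\<lambda>x. Phi b x) \<longlongrightarrow> 0) (at_right 0)"
    by (rule Phi_tendsto0) (use assms in \<open>auto simp: eventually_at_right_field intro!: exI[of _ 1]\<close>)
  then have "eventually (\<lambda>x. Phi b x < y) (at_right 0)"
    using assms(2) by (rule order_tendstoD)
  then obtain e where e: "e > 0" "\<And>x. x > 0 \<Longrightarrow> x < e \<Longrightarrow> Phi b x < y"
    by (auto simp: eventually_at_right_field)
  define z2 where "z2 = min (e/2) (z1/2)"
  have z2: "0 < z2" "z2 < z1" "Phi b z2 < y"
    using e z1 by (auto simp: z2_def intro!: e(2))
  have "\<exists>x. z2 \<le> x \<and> x \<le> z1 \<and> Phi b x = y"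
    by (rule IVT') (use z2 z1 assms Phi_cont[of b z2 z1] in auto)
  then obtain x where "z2 \<le> x" "x \<le> z1" "Phi b x = y" by blast
  then show ?thesis using z2 z1 by (intro exI[of _ x]) auto
qed

lemma Fh_nonneg: "b > 0 \<Longrightarrow> 0 \<le> z \<Longrightarrow> z < 1 \<Longrightarrow> Fh b z \<ge> 0"
  unfolding Fh_def by (rule suminf_nonneg) (auto intro!: cf_summable mult_nonneg_nonneg cf_nonneg)

lemma Phi_nonneg: "b > 0 \<Longrightarrow> 0 \<le> z \<Longrightarrow> z < 1 \<Longrightarrow> Phi b z \<ge> 0"
  unfolding Phi_def by (simp add: Fh_nonneg)

locale opt =
  fixes a k c l z0 :: real
  assumes a: "a > 0" and k0: "0 < k" and k1: "k < 1" and l: "l > 0" and cl: "c + l > 0"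
    and z0: "0 < z0" and z1: "z0 < 1"
begin

definition "b = 1 / k"
definition "rho = c + l"
definition "beta = k * rho / (1 - k)"
definition "zt t = z0 * exp (- beta * t)"
definition "A = (1-k) powr (-b) * a powr (-b) * rho powr b"
definition "gs t = A * (zt t / (1 - zt t)) powr b"
definition "C = (1-k) powr (1-b) * a powr (-b) * rho powr (b-1)"
definition "X t = C * Phi b (zt t)"

lemma b1: "b > 1" unfolding b_def using k0 k1 by simp
lemma rho: "rho > 0" unfolding rho_def using cl by simp
lemma beta: "beta > 0" unfolding beta_def using k0 k1 rho by simp
lemma bk: "b * k = 1" unfolding b_def using k0 by simp

lemma zt_pos: "zt t > 0" unfolding zt_def using z0 by simp
lemma zt_le: "t \<ge> 0 \<Longrightarrow> zt t \<le> z0"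
  unfolding zt_def using z0 beta by (simp add: mult_le_cancel_left1)
lemma zt_lt1: "t \<ge> 0 \<Longrightarrow> zt t < 1" using zt_le[of t] z1 by simp
lemma zt_0: "zt 0 = z0" by (simp add: zt_def)
lemma zt_deriv: "(zt has_real_derivative (- beta * zt t)) (at t)"
  unfolding zt_def[abs_def] by (rule derivative_eq_intros refl | simp)+
lemma zt_lim: "(zt \<longlongrightarrow> 0) at_top"
proof -
  have "filterlim (\<lambda>t. beta * t) at_top at_top"
    by (rule filterlim_tendsto_pos_mult_at_top[OF tendsto_const beta filterlim_ident])
  then have "filterlim (\<lambda>t. - (beta * t)) at_bot at_top"
    by (simp add: filterlim_uminus_at_bot)
  then have "((\<lambda>t. exp (- (beta * t))) \<longlongrightarrow> 0) at_top"
    by (rule filterlim_compose[OF exp_at_bot])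
  then have "((\<lambda>t. z0 * exp (- (beta * t))) \<longlongrightarrow> z0 * 0) at_top"
    by (intro tendsto_mult tendsto_const)
  then show ?thesis by (simp add: zt_def[abs_def])
qed

lemma CA: "C * b * beta = A"
proof -
  have "(1-k) powr (1 + -b) = (1-k) powr 1 * (1-k) powr (-b)"
    by (rule powr_add)
  then have e1: "(1-k) powr (1-b) = (1-k) * (1-k) powr (-b)"
    using k1 by simp
  have e2: "rho powr (b-1) = rho powr b / rho"
    using rho by (simp add: powr_diff)
  define Q where "Q = (1-k) powr (-b) * a powr (-b) * rho powr b"
  have "C = (1-k) * Q / rho" unfolding C_def Q_def e1 e2 by simp
  then have h: "C * rho = (1-k) * Q" using rho by simp
  have "C * b * beta = (C * rho) * (b * k) / (1 - k)" unfolding beta_def by simp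
  also have "\<dots> = Q * (b * k)" unfolding h using k1 by simp
  finally have "C * b * beta = Q * (b * k)" .
  then show ?thesis using bk by (simp add: Q_def A_def)
qed

lemma gs_alt: assumes "t \<ge> 0" shows "gs t = A * zt t powr b * (1 - zt t) powr (- b)"
proof -
  have "(zt t/(1-zt t)) powr b = zt t powr b / (1-zt t) powr b"
    using zt_pos[of t] zt_lt1[of t] assms by (simp add: powr_divide)
  moreover have "(1 - zt t) powr (-b) = inverse ((1 - zt t) powr b)" by (rule powr_minus)
  ultimately show ?thesis unfolding gs_def by (simp add: divide_inverse)
qed

lemma X_deriv:
  assumes "t \<ge> 0"
  shows "(X has_real_derivative (- gs t)) (at t)"
proof -
  have p: "0 < zt t" "zt t < 1" using zt_pos zt_lt1 assms by auto
  have "(X has_real_derivative C * ((b * zt t powr (b - 1) * (1 - zt t) powr (- b)) * (- beta * zt t))) (at t)"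
    unfolding X_def[abs_def]
    by (intro DERIV_cmult DERIV_chain2[OF Phi_deriv zt_deriv]) (use p b1 in auto)
  moreover have "C * ((b * zt t powr (b - 1) * (1 - zt t) powr (- b)) * (- beta * zt t)) = - gs t"
  proof -
    have "zt t powr (b - 1) * zt t = zt t powr b"
      using p by (simp add: powr_diff)
    then have "C * ((b * zt t powr (b - 1) * (1 - zt t) powr (- b)) * (- beta * zt t))
        = - ((C * b * beta) * zt t powr b * (1 - zt t) powr (- b))"
      by (simp add: algebra_simps)
    then show ?thesis using gs_alt[OF assms] CA by simp
  qed
  ultimately show ?thesis by simp
qed

lemma X_0: "X 0 = C * Phi b z0" by (simp add: X_def zt_0)

lemma X_lim: "(X \<longlongrightarrow> 0) at_top"
proof -
  have "((\<lambda>t. Phi b (zt t)) \<longlongrightarrow> 0) at_top"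
    by (rule Phi_tendsto0) (use b1 zt_lim zt_pos in \<open>auto intro!: always_eventually less_imp_le\<close>)
  then have "((\<lambda>t. C * Phi b (zt t)) \<longlongrightarrow> C * 0) at_top" by (intro tendsto_mult tendsto_const)
  then show ?thesis by (simp add: X_def[abs_def])
qed

lemma C_pos: "C > 0" unfolding C_def using k1 a rho by simp
lemma A_pos: "A > 0" unfolding A_def using k1 a rho by simp

lemma X_nonneg: "t \<ge> 0 \<Longrightarrow> X t \<ge> 0"
  unfolding X_def using C_pos Phi_nonneg[of b "zt t"] b1 zt_pos[of t] zt_lt1[of t] by simp

lemma gs_pos: "t \<ge> 0 \<Longrightarrow> gs t > 0"
  unfolding gs_def using A_pos zt_pos[of t] zt_lt1[of t] by simp

lemma gs_isCont: "t \<ge> 0 \<Longrightarrow> isCont gs t"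
  using zt_pos[of t] zt_lt1[of t] unfolding gs_def[abs_def]
  by (intro continuous_intros DERIV_isCont[OF zt_deriv]) auto

end

context opt begin

definition "Gs t = b * ln ((1 - zt t) / (1 - z0)) / a"
definition "P t = exp (- rho * t) * ((1 - zt t) / (1 - z0)) powr (- b)"
definition "Hs t = l / rho * exp (- rho * t) * (1 - z0) powr b * (1 - zt t) powr (1 - b)"
definition "D = a * l / rho * (1 - z0) powr b / (A powr (1 - k) * z0 powr (b - 1))"

lemma Apk: "A powr k = rho / ((1 - k) * a)"
proof -
  have "A powr k = (1-k) powr (-b * k) * a powr (-b * k) * rho powr (b * k)"
    unfolding A_def using k1 a rho by (simp add: powr_mult powr_powr)
  also have "\<dots> = (1-k) powr (-1) * a powr (-1) * rho"
    using bk rho by simp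
  also have "\<dots> = rho / ((1 - k) * a)"
    using k1 a by (simp add: powr_minus field_simps)
  finally show ?thesis .
qed

lemma gs_powr_k: "t \<ge> 0 \<Longrightarrow> gs t powr k = rho / ((1 - k) * a) * (zt t / (1 - zt t))"
proof -
  assume t: "t \<ge> 0"
  have p: "zt t / (1 - zt t) > 0" using zt_pos[of t] zt_lt1[OF t] by simp
  have "gs t powr k = A powr k * ((zt t / (1 - zt t)) powr b) powr k"
    unfolding gs_def using A_pos p by (simp add: powr_mult)
  also have "\<dots> = A powr k * (zt t / (1 - zt t))"
    using p bk zt_pos[of t] zt_lt1[OF t] by (simp add: powr_powr)
  finally show ?thesis using Apk by simp
qed

lemma Gs_0: "Gs 0 = 0" by (simp add: Gs_def zt_0)

lemma Gs_deriv:
  assumes t: "t \<ge> 0"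
  shows "(Gs has_real_derivative gs t powr k) (at t)"
proof -
  have p: "0 < zt t" "zt t < 1" using zt_pos zt_lt1 t by auto
  have "(Gs has_real_derivative b * (inverse ((1 - zt t) / (1 - z0)) * ((0 - (- beta * zt t)) / (1 - z0))) / a) (at t)"
    unfolding Gs_def[abs_def]
    by (intro DERIV_cdivide DERIV_cmult DERIV_chain2[OF DERIV_ln] DERIV_diff DERIV_const zt_deriv)
       (use p z1 in simp)
  moreover have "b * (inverse ((1 - zt t) / (1 - z0)) * ((0 - (- beta * zt t)) / (1 - z0))) / a
      = (b * beta) / a * (zt t / (1 - zt t))"
  proof -
    have n: "1 - zt t \<noteq> 0" "1 - z0 \<noteq> 0" using p z1 by auto
    have "inverse ((1 - zt t) / (1 - z0)) * ((0 - (- beta * zt t)) / (1 - z0))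
        = ((1 - z0) / (1 - zt t)) * ((beta * zt t) / (1 - z0))"
      by (simp add: inverse_divide)
    also have "\<dots> = beta * zt t / (1 - zt t)" using n by simp
    finally show ?thesis using n by (simp add: ac_simps)
  qed
  moreover have "b * beta = rho / (1 - k)"
    unfolding beta_def using bk k1 by (simp add: field_simps)
  ultimately show ?thesis using gs_powr_k[OF t] by simp
qed

lemma P_eq: "t \<ge> 0 \<Longrightarrow> exp (- rho * t - a * Gs t) = P t"
proof -
  assume t: "t \<ge> 0"
  have y: "(1 - zt t) / (1 - z0) > 0" using zt_lt1[OF t] z1 by simp
  have y2: "zt t \<noteq> 1" "z0 \<noteq> 1" using zt_lt1[OF t] z1 by auto
  have "a * Gs t = b * ln ((1 - zt t) / (1 - z0))" unfolding Gs_def using a by simp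
  then have "exp (- rho * t - a * Gs t) = exp (- rho * t) * exp (- b * ln ((1 - zt t) / (1 - z0)))"
    by (simp add: exp_diff exp_minus field_simps)
  also have "exp (- b * ln ((1 - zt t) / (1 - z0))) = ((1 - zt t) / (1 - z0)) powr (- b)"
    using y y2 by (simp add: powr_def)
  finally show ?thesis by (simp add: P_def)
qed

lemma P_pos: "t \<ge> 0 \<Longrightarrow> P t > 0" unfolding P_def using z1 zt_lt1[of t] by (simp add: powr_def)

lemma Hs_deriv:
  assumes t: "t \<ge> 0"
  shows "(Hs has_real_derivative - l * P t) (at t)"
proof -
  have p: "0 < zt t" "zt t < 1" using zt_pos zt_lt1 t by auto
  define K where "K = l / rho * (1 - z0) powr b"
  have HsK: "Hs = (\<lambda>t. K * (exp (- rho * t) * (1 - zt t) powr (1 - b)))"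
    by (simp add: Hs_def K_def fun_eq_iff)
  have dE: "((\<lambda>t. exp (- rho * t)) has_real_derivative exp (- rho * t) * (- rho)) (at t)"
    by (rule DERIV_chain2[OF DERIV_exp]) (rule derivative_eq_intros refl | simp)+
  have dW: "((\<lambda>t. (1 - zt t) powr (1 - b)) has_real_derivative
      (1 - b) * (1 - zt t) powr (1 - b - of_nat 1) * (0 - (- beta * zt t))) (at t)"
    by (intro DERIV_fun_powr DERIV_diff DERIV_const zt_deriv) (use p in simp)
  have d: "(Hs has_real_derivative K * (exp (- rho * t) * (- rho) * (1 - zt t) powr (1 - b)
       + ((1 - b) * (1 - zt t) powr (1 - b - of_nat 1) * (0 - (- beta * zt t))) * exp (- rho * t))) (at t)"
    unfolding HsK by (intro DERIV_cmult DERIV_mult dE dW)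
  have w1: "(1 - zt t) powr (1 - b) = (1 - zt t) * (1 - zt t) powr (- b)"
  proof -
    have "(1 - zt t) powr (1 + - b) = (1 - zt t) powr 1 * (1 - zt t) powr (- b)" by (rule powr_add)
    then show ?thesis using p by simp
  qed
  have bb: "(1 - b) * beta = - rho"
    unfolding beta_def using bk k1 k0 by (simp add: field_simps)
  have "K * (exp (- rho * t) * (- rho) * (1 - zt t) powr (1 - b)
       + ((1 - b) * (1 - zt t) powr (1 - b - of_nat 1) * (0 - (- beta * zt t))) * exp (- rho * t))
     = K * exp (- rho * t) * (1 - zt t) powr (- b) * (- rho * (1 - zt t) + ((1 - b) * beta) * zt t)"
    unfolding w1 by (simp add: algebra_simps)
  also have "\<dots> = - (K * rho) * exp (- rho * t) * (1 - zt t) powr (- b)"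
    unfolding bb by (simp add: algebra_simps)
  also have "\<dots> = - l * P t"
  proof -
    have "((1 - zt t) / (1 - z0)) powr (- b) = (1 - zt t) powr (- b) / (1 - z0) powr (- b)"
      using p z1 powr_divide[of "1 - zt t" "1 - z0" "-b"] by simp
    moreover have "(1 - z0) powr (- b) = inverse ((1 - z0) powr b)" by (rule powr_minus)
    ultimately have "((1 - zt t) / (1 - z0)) powr (- b) = (1 - zt t) powr (- b) * (1 - z0) powr b"
      by (simp add: divide_inverse)
    then show ?thesis unfolding P_def K_def using rho by simp
  qed
  finally show ?thesis using d by simp
qed

lemma Hs_0: "Hs 0 = l / rho * (1 - z0)"
proof -
  have "(1 - z0) powr b * (1 - z0) powr (1 - b) = (1 - z0)"
    using z1 by (simp add: powr_add[symmetric])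
  then show ?thesis unfolding Hs_def zt_0 by (simp add: mult.assoc)
qed

lemma Hs_lim: "(Hs \<longlongrightarrow> 0) at_top"
proof -
  have "filterlim (\<lambda>t. rho * t) at_top at_top"
    by (rule filterlim_tendsto_pos_mult_at_top[OF tendsto_const rho filterlim_ident])
  then have "filterlim (\<lambda>t. - (rho * t)) at_bot at_top"
    by (simp add: filterlim_uminus_at_bot)
  then have e: "((\<lambda>t. exp (- (rho * t))) \<longlongrightarrow> 0) at_top"
    by (rule filterlim_compose[OF exp_at_bot])
  have "((\<lambda>t. (1 - zt t) powr (1 - b)) \<longlongrightarrow> (1 - 0) powr (1 - b)) at_top"
    by (intro tendsto_powr tendsto_diff tendsto_const zt_lim) simp
  then have "((\<lambda>t. l / rho * exp (- (rho * t)) * (1 - z0) powr b * (1 - zt t) powr (1 - b))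
      \<longlongrightarrow> l / rho * 0 * (1 - z0) powr b * (1 - 0) powr (1 - b)) at_top"
    by (intro tendsto_mult tendsto_const e)
  then show ?thesis by (simp add: Hs_def[abs_def])
qed

lemma Hs_nonneg: "Hs t \<ge> 0" unfolding Hs_def using l rho by simp

lemma KKT: "t \<ge> 0 \<Longrightarrow> a * Hs t = D * gs t powr (1 - k)"
proof -
  assume t: "t \<ge> 0"
  have p: "0 < zt t" "zt t < 1" using zt_pos zt_lt1 t by auto
  have e1: "b * (1 - k) = b - 1" using bk by (simp add: algebra_simps)
  have "gs t powr (1 - k) = A powr (1 - k) * (zt t / (1 - zt t)) powr (b - 1)"
    unfolding gs_def using A_pos p by (simp add: powr_mult powr_powr e1)
  also have "(zt t / (1 - zt t)) powr (b - 1) = zt t powr (b - 1) * (1 - zt t) powr (1 - b)"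
  proof -
    have "(zt t / (1 - zt t)) powr (b - 1) = zt t powr (b - 1) / (1 - zt t) powr (b - 1)"
      using p by (simp add: powr_divide)
    moreover have "(1 - zt t) powr (- (b - 1)) = inverse ((1 - zt t) powr (b - 1))"
      by (rule powr_minus)
    ultimately show ?thesis by (simp add: divide_inverse)
  qed
  also have "zt t powr (b - 1) = z0 powr (b - 1) * exp (- rho * t)"
  proof -
    have "zt t powr (b - 1) = z0 powr (b - 1) * exp (- beta * t) powr (b - 1)"
      unfolding zt_def using z0 by (simp add: powr_mult)
    also have "exp (- beta * t) powr (b - 1) = exp (- ((b - 1) * beta) * t)"
      by (simp add: powr_def algebra_simps)
    also have "(b - 1) * beta = rho"
      unfolding beta_def using bk k1 k0 by (simp add: field_simps)
    finally show ?thesis .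
  qed
  finally have "gs t powr (1 - k) = A powr (1 - k) * z0 powr (b - 1) * exp (- rho * t) * (1 - zt t) powr (1 - b)"
    by simp
  moreover have "A powr (1 - k) * z0 powr (b - 1) > 0" using A_pos z0 by simp
  ultimately show ?thesis unfolding D_def Hs_def using A_pos a l rho z0 z1 p
    by (simp add: field_simps)
qed

end

lemma meas_LBINT:
  fixes f :: "real \<Rightarrow> real"
  assumes [measurable]: "f \<in> borel_measurable borel"
  shows "(\<lambda>s::real. LBINT t=0..s. f t) \<in> borel_measurable borel"
proof -
  have "(\<lambda>s::real. LBINT t=0..s. f t) = (\<lambda>s. if 0 \<le> s then (\<integral>t. indicator {t. 0 < t \<and> t < s} t * f t \<partial>lborel)
     else - (\<integral>t. indicator {t. s < t \<and> t < 0} t * f t \<partial>lborel))"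
    by (auto simp: interval_lebesgue_integral_def set_lebesgue_integral_def einterval_def fun_eq_iff)
  also have "\<dots> \<in> borel_measurable borel"
    by measurable
  finally show ?thesis .
qed

lemma int_ind_Icc: "integrable lborel (indicat_real {a..b::real})"
  by (rule integrable_real_indicator) (auto simp: emeasure_lborel_Icc_eq)

lemma LBINT_Icc0: fixes s :: real and f :: "real \<Rightarrow> real" shows "0 \<le> s \<Longrightarrow> (LBINT t=0..s. f t) = (\<integral>t. indicator {0..s} t * f t \<partial>lborel)"
  using interval_integral_Icc[of 0 s f] by (simp add: set_lebesgue_integral_def zero_ereal_def)

lemma nn_LBINT:
  fixes f :: "real \<Rightarrow> real"
  assumes "set_integrable lborel {0..s} f" "\<And>t. 0 \<le> t \<Longrightarrow> t \<le> s \<Longrightarrow> 0 \<le> f t" "0 \<le> s"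
  shows "ennreal (LBINT t=0..s. f t) = (\<integral>\<^sup>+ t. ennreal (f t) * indicator {0..s} t \<partial>lborel)"
proof -
  have i: "integrable lborel (\<lambda>t. indicator {0..s} t * f t)"
    using assms(1) by (simp add: set_integrable_def)
  have "(\<integral>\<^sup>+ t. ennreal (indicator {0..s} t * f t) \<partial>lborel) = ennreal (\<integral>t. indicator {0..s} t * f t \<partial>lborel)"
    by (rule nn_integral_eq_integral[OF i]) (use assms(2) in \<open>auto split: split_indicator\<close>)
  moreover have "(\<lambda>t. ennreal (indicator {0..s} t * f t)) = (\<lambda>t. ennreal (f t) * indicator {0..s} t)"
    by (auto simp: fun_eq_iff split: split_indicator)
  ultimately show ?thesis using LBINT_Icc0[OF assms(3), of f] by simp
qed

lemma powk_setint:
  fixes \<gamma> :: "real \<Rightarrow> real"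
  assumes m[measurable]: "\<gamma> \<in> borel_measurable borel" and nn: "\<And>t. 0 \<le> t \<Longrightarrow> 0 \<le> \<gamma> t"
    and si: "set_integrable lborel {0..s} \<gamma>" and k: "0 < k" "k < 1"
  shows "set_integrable lborel {0..s} (\<lambda>t. \<gamma> t powr k)"
proof (rule set_integrable_bound)
  have "set_integrable lborel {0..s} (\<lambda>t. 1::real)"
    unfolding set_integrable_def by (simp add: int_ind_Icc)
  then show "set_integrable lborel {0..s} (\<lambda>t. 1 + \<gamma> t)"
    using si by (rule set_integral_add)
  show "set_borel_measurable lborel {0..s} (\<lambda>t. \<gamma> t powr k)"
    unfolding set_borel_measurable_def by measurable
  show "AE x in lborel. x \<in> {0..s} \<longrightarrow> norm (\<gamma> x powr k) \<le> norm (1 + \<gamma> x)"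
  proof (intro AE_I2 impI)
    fix x assume x: "x \<in> {0..s}"
    then have g: "0 \<le> \<gamma> x" using nn by auto
    have "\<gamma> x powr k \<le> 1 + \<gamma> x"
    proof (cases "\<gamma> x \<le> 1")
      case True
      then have "\<gamma> x powr k \<le> 1" using g k by (intro powr_le1) auto
      then show ?thesis using g by simp
    next
      case False
      then have "\<gamma> x powr k \<le> \<gamma> x powr 1" using k by (intro powr_mono) auto
      then show ?thesis using False by simp
    qed
    then show "norm (\<gamma> x powr k) \<le> norm (1 + \<gamma> x)" using g by simp
  qed
qed

lemma LBINT_util:
  fixes \<gamma> :: "real \<Rightarrow> real"
  assumes m[measurable]: "\<gamma> \<in> borel_measurable borel" and nn: "\<And>t. 0 \<le> t \<Longrightarrow> 0 \<le> \<gamma> t"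
    and si: "set_integrable lborel {0..s} \<gamma>" and k: "0 < k" "k < 1" and s: "0 \<le> s"
  shows "(LBINT t=0..s. util a k c (\<gamma> t)) = a * (LBINT t=0..s. \<gamma> t powr k) + c * s"
proof -
  have i1: "integrable lborel (\<lambda>t. indicator {0..s} t * \<gamma> t powr k)"
    using powk_setint[OF m nn si k] by (simp add: set_integrable_def)
  have i2: "integrable lborel (\<lambda>t. indicator {0..s} t * c :: real)"
    by (simp add: int_ind_Icc)
  have "(LBINT t=0..s. util a k c (\<gamma> t)) = (\<integral>t. a * (indicator {0..s} t * \<gamma> t powr k) + indicator {0..s} t * c \<partial>lborel)"
    unfolding LBINT_Icc0[OF s] util_def by (intro Bochner_Integration.integral_cong) (auto simp: algebra_simps)
  also have "\<dots> = a * (\<integral>t. indicator {0..s} t * \<gamma> t powr k \<partial>lborel) + (\<integral>t. indicator {0..s} t * c \<partial>lborel)"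
    using i1 i2 by simp
  also have "(\<integral>t. indicator {0..s} t * c \<partial>lborel) = c * s"
    using s by (simp add: mult.commute)
  finally show ?thesis unfolding LBINT_Icc0[OF s] .
qed

lemma objective_eq:
  fixes \<gamma> :: "real \<Rightarrow> real"
  assumes adm: "admissible x \<gamma>" and k: "0 < k" "k < 1" and l: "0 < l"
  shows "objective a k c l \<gamma> = - enn2real (\<integral>\<^sup>+ s. ennreal (l * exp (- (c + l) * s - a * (LBINT t=0..s. \<gamma> t powr k))) * indicator {0..} s \<partial>lborel)"
proof -
  have m[measurable]: "\<gamma> \<in> borel_measurable borel" and nn: "\<And>t. 0 \<le> t \<Longrightarrow> 0 \<le> \<gamma> t"
    and si: "\<And>s. 0 \<le> s \<Longrightarrow> set_integrable lborel {0..s} \<gamma>"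
    using adm unfolding admissible_def by auto
  have mu[measurable]: "(\<lambda>s::real. LBINT t=0..s. util a k c (\<gamma> t)) \<in> borel_measurable borel"
    by (rule meas_LBINT) (simp add: util_def)
  have mG[measurable]: "(\<lambda>s::real. LBINT t=0..s. \<gamma> t powr k) \<in> borel_measurable borel"
    by (rule meas_LBINT) simp
  define h where "h s = indicator {0..} s * (l * exp (- (c + l) * s - a * (LBINT t=0..s. \<gamma> t powr k)))" for s
  have mh[measurable]: "h \<in> borel_measurable borel" unfolding h_def by measurable
  have "objective a k c l \<gamma> = (\<integral>s. exponential_density l s * (- exp (- (LBINT t=0..s. util a k c (\<gamma> t)))) \<partial>lborel)"
    unfolding objective_def
    by (subst integral_density) (auto simp: exponential_density_nonneg l)
  also have "\<dots> = (\<integral>s. - h s \<partial>lborel)"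
  proof (intro Bochner_Integration.integral_cong refl)
    fix s :: real
    show "exponential_density l s * (- exp (- (LBINT t=0..s. util a k c (\<gamma> t)))) = - h s"
    proof (cases "0 \<le> s")
      case True
      have "exponential_density l s * (- exp (- (LBINT t=0..s. util a k c (\<gamma> t))))
          = - (l * (exp (- s * l) * exp (- (a * (LBINT t=0..s. \<gamma> t powr k) + c * s))))"
        using True by (simp add: exponential_density_def LBINT_util[OF m nn si[OF True] k True])
      also have "\<dots> = - h s" using True
        by (simp add: h_def flip: exp_add) (simp add: algebra_simps)
      finally show ?thesis .
    qed (simp add: exponential_density_def h_def)
  qed
  also have "\<dots> = - (\<integral>s. h s \<partial>lborel)" by simp
  also have "(\<integral>s. h s \<partial>lborel) = enn2real (\<integral>\<^sup>+ s. ennreal (h s) \<partial>lborel)"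
    by (rule integral_eq_nn_integral) (auto simp: h_def l less_imp_le)
  also have "(\<lambda>s. ennreal (h s)) = (\<lambda>s. ennreal (l * exp (- (c + l) * s - a * (LBINT t=0..s. \<gamma> t powr k))) * indicator {0..} s)"
    by (auto simp: h_def fun_eq_iff split: split_indicator)
  finally show ?thesis .
qed

context opt begin

definition "gsF t = (if 0 \<le> t then gs t else 0)"

lemma gs_meas[measurable]: "gs \<in> borel_measurable borel" unfolding gs_def[abs_def] zt_def[abs_def] by measurable
lemma gsF_meas[measurable]: "gsF \<in> borel_measurable borel" unfolding gsF_def[abs_def] by measurable
lemma P_meas[measurable]: "P \<in> borel_measurable borel" unfolding P_def[abs_def] zt_def[abs_def] by measurable

lemma gs_nonneg: "0 \<le> t \<Longrightarrow> 0 \<le> gs t" using gs_pos[of t] by simp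

lemma gsF_nonneg: "gsF t \<ge> 0" unfolding gsF_def using gs_pos[of t] by (auto intro: less_imp_le)

lemma gs_cont_on: "continuous_on {0..t} gs"
  by (rule continuous_at_imp_continuous_on) (auto intro: gs_isCont)

lemma gsF_cont_on: "continuous_on {0..t} gsF"
  using gs_cont_on by (rule continuous_on_cong[THEN iffD1, rotated 2]) (auto simp: gsF_def)

lemma gsF_setint: "set_integrable lborel {0..t} gsF"
  unfolding set_integrable_def by (rule borel_integrable_compact[OF compact_Icc gsF_cont_on])

lemma mX_deriv: "0 \<le> x \<Longrightarrow> ((\<lambda>s. - X s) has_real_derivative gsF x) (at x)"
  using X_deriv[of x] by (auto simp: gsF_def intro: derivative_eq_intros)

lemma gsF_LBINT: "0 \<le> t \<Longrightarrow> (LBINT s=0..t. gsF s) = X 0 - X t"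
proof -
  assume t: "0 \<le> t"
  have "(LBINT s=ereal 0..t. gsF s) = (- X t) - (- X 0)"
  proof (rule interval_integral_FTC_finite)
    show "continuous_on {min 0 t..max 0 t} gsF" using t gsF_cont_on[of t] by simp
    fix x assume "min 0 t \<le> x" "x \<le> max 0 t"
    then have "0 \<le> x" using t by simp
    then have "((\<lambda>s. - X s) has_real_derivative gsF x) (at x)" by (rule mX_deriv)
    then show "((\<lambda>s. - X s) has_vector_derivative gsF x) (at x within {min 0 t..max 0 t})"
      unfolding has_real_derivative_iff_has_vector_derivative by (rule has_vector_derivative_at_within)
  qed
  then show ?thesis by (simp add: zero_ereal_def)
qed

lemma gsF_nn: "(\<integral>\<^sup>+ s. ennreal (gsF s) * indicator {0..} s \<partial>lborel) = ennreal (X 0)"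
proof -
  have "(\<integral>\<^sup>+ s. ennreal (gsF s) * indicator {0..} s \<partial>lborel) = ennreal (0 - (- X 0))"
    by (rule nn_integral_FTC_atLeast) (use mX_deriv gsF_nonneg X_lim in \<open>auto intro: tendsto_minus_cancel_left[THEN iffD1]\<close>)
  then show ?thesis by simp
qed

lemma gsk_cont_on: "continuous_on {0..t} (\<lambda>s. gsF s powr k)"
proof -
  have "continuous_on {0..t} (\<lambda>s. gs s powr k)"
    by (rule continuous_on_powr'[OF gs_cont_on continuous_on_const]) (auto intro: gs_nonneg k0)
  then show ?thesis
    by (rule continuous_on_cong[THEN iffD1, rotated 2]) (auto simp: gsF_def)
qed

lemma Gs_LBINT: "0 \<le> t \<Longrightarrow> (LBINT s=0..t. gsF s powr k) = Gs t"
proof -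
  assume t: "0 \<le> t"
  have "(LBINT s=ereal 0..t. gsF s powr k) = Gs t - Gs 0"
  proof (rule interval_integral_FTC_finite)
    show "continuous_on {min 0 t..max 0 t} (\<lambda>s. gsF s powr k)" using t gsk_cont_on[of t] by simp
    fix x assume "min 0 t \<le> x" "x \<le> max 0 t"
    then have "0 \<le> x" using t by simp
    then have "(Gs has_real_derivative gsF x powr k) (at x)" using Gs_deriv by (simp add: gsF_def)
    then show "(Gs has_vector_derivative gsF x powr k) (at x within {min 0 t..max 0 t})"
      unfolding has_real_derivative_iff_has_vector_derivative by (rule has_vector_derivative_at_within)
  qed
  then show ?thesis by (simp add: Gs_0 zero_ereal_def)
qed

lemma P_nn: "0 \<le> r \<Longrightarrow> (\<integral>\<^sup>+ s. ennreal (l * P s) * indicator {r..} s \<partial>lborel) = ennreal (Hs r)"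
proof -
  assume r: "0 \<le> r"
  have "(\<integral>\<^sup>+ s. ennreal (l * P s) * indicator {r..} s \<partial>lborel) = ennreal (0 - (- Hs r))"
  proof (rule nn_integral_FTC_atLeast)
    show "(\<lambda>s. l * P s) \<in> borel_measurable borel" by measurable
    fix x assume "r \<le> x"
    then have x: "0 \<le> x" using r by simp
    show "((\<lambda>s. - Hs s) has_real_derivative l * P x) (at x)"
      using Hs_deriv[OF x] by (auto intro: derivative_eq_intros)
    show "0 \<le> l * P x" using P_pos[OF x] l by simp
  next
    show "((\<lambda>s. - Hs s) \<longlongrightarrow> 0) at_top" using Hs_lim tendsto_minus by fastforce
  qed
  then show ?thesis by simp
qed

lemma tonelli:
  fixes q :: "real \<Rightarrow> real"
  assumes qm[measurable]: "q \<in> borel_measurable borel" and qn: "\<And>t. 0 \<le> t \<Longrightarrow> 0 \<le> q t"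
    and qi: "\<And>s. 0 \<le> s \<Longrightarrow> set_integrable lborel {0..s} q"
  shows "(\<integral>\<^sup>+ s. ennreal (l * P s * (LBINT t=0..s. q t)) * indicator {0..} s \<partial>lborel)
       = (\<integral>\<^sup>+ t. ennreal (q t * Hs t) * indicator {0..} t \<partial>lborel)"
proof -
  define f where "f s t = (ennreal (l * P s) * indicator {0..} s) * (ennreal (q t) * indicator {0..s} t)" for s t :: real
  have [measurable]: "Measurable.pred (borel \<Otimes>\<^sub>M borel) (\<lambda>x::real\<times>real. fst x \<in> {0..snd x})"
    unfolding atLeastAtMost_iff by measurable
  have fm: "(\<lambda>(t, s). f s t) \<in> borel_measurable (lborel \<Otimes>\<^sub>M lborel)"
    unfolding f_def by measurable
  have 1: "ennreal (l * P s * (LBINT t=0..s. q t)) * indicator {0..} s = (\<integral>\<^sup>+ t. f s t \<partial>lborel)" for s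
  proof (cases "0 \<le> s")
    case True
    have "(\<integral>\<^sup>+ t. f s t \<partial>lborel) = (ennreal (l * P s) * indicator {0..} s) * (\<integral>\<^sup>+ t. ennreal (q t) * indicator {0..s} t \<partial>lborel)"
      unfolding f_def by (rule nn_integral_cmult) measurable
    also have "(\<integral>\<^sup>+ t. ennreal (q t) * indicator {0..s} t \<partial>lborel) = ennreal (LBINT t=0..s. q t)"
      by (rule nn_LBINT[symmetric]) (use qi qn True in auto)
    finally show ?thesis using True P_pos[OF True] l
      by (simp add: ennreal_mult'[symmetric])
  qed (simp add: f_def)
  have 2: "(\<integral>\<^sup>+ s. f s t \<partial>lborel) = ennreal (q t * Hs t) * indicator {0..} t" for t
  proof (cases "0 \<le> t")
    case True
    have "(\<integral>\<^sup>+ s. f s t \<partial>lborel) = (\<integral>\<^sup>+ s. ennreal (q t) * (ennreal (l * P s) * indicator {t..} s) \<partial>lborel)"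
      unfolding f_def using True by (intro nn_integral_cong) (auto split: split_indicator simp: mult.commute)
    also have "\<dots> = ennreal (q t) * (\<integral>\<^sup>+ s. ennreal (l * P s) * indicator {t..} s \<partial>lborel)"
      by (rule nn_integral_cmult) measurable
    also have "\<dots> = ennreal (q t * Hs t)"
      using P_nn[OF True] qn[OF True] Hs_nonneg[of t] by (simp add: ennreal_mult)
    finally show ?thesis using True by simp
  qed (simp add: f_def)
  have "(\<integral>\<^sup>+ s. ennreal (l * P s * (LBINT t=0..s. q t)) * indicator {0..} s \<partial>lborel)
      = (\<integral>\<^sup>+ s. (\<integral>\<^sup>+ t. f s t \<partial>lborel) \<partial>lborel)"
    using 1 by simp
  also have "\<dots> = (\<integral>\<^sup>+ t. (\<integral>\<^sup>+ s. f s t \<partial>lborel) \<partial>lborel)"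
    by (rule lborel_pair.Fubini'[OF fm])
  also have "\<dots> = (\<integral>\<^sup>+ t. ennreal (q t * Hs t) * indicator {0..} t \<partial>lborel)"
    using 2 by simp
  finally show ?thesis .
qed

end

lemma G_nonneg:
  fixes \<gamma> :: "real \<Rightarrow> real" and s :: real
  assumes "0 \<le> s" shows "0 \<le> (LBINT t=0..s. \<gamma> t powr k)"
  unfolding LBINT_Icc0[OF assms] by (rule Bochner_Integration.integral_nonneg) simp

lemma nn_gamma_le:
  fixes \<gamma> :: "real \<Rightarrow> real"
  assumes adm: "admissible x \<gamma>"
  shows "(\<integral>\<^sup>+ t. ennreal (\<gamma> t) * indicator {0..} t \<partial>lborel) \<le> ennreal x"
proof -
  have m[measurable]: "\<gamma> \<in> borel_measurable borel" and nn: "\<And>t. 0 \<le> t \<Longrightarrow> 0 \<le> \<gamma> t"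
    and si: "\<And>s. 0 \<le> s \<Longrightarrow> set_integrable lborel {0..s} \<gamma>"
    and bd: "\<And>s. 0 \<le> s \<Longrightarrow> (LBINT t=0..s. \<gamma> t) \<le> x"
    using adm unfolding admissible_def by auto
  let ?f = "\<lambda>(i::nat) (t::real). ennreal (\<gamma> t) * indicator {0..real i} t"
  let ?fR = "\<lambda>t. ennreal (\<gamma> t) * indicator {0..} t"
  have "(SUP i. ?f i t) = ?fR t" for t
  proof (rule LIMSEQ_unique[OF LIMSEQ_SUP])
    obtain n where "t < real n"
      using reals_Archimedean2[of t] ..
    then have "eventually (\<lambda>n. ?f n t = ?fR t) sequentially"
      by (auto simp: frequently_def intro!: eventually_sequentiallyI[where c=n] split: split_indicator)
    then show "(\<lambda>n. ?f n t) \<longlonglongrightarrow> ?fR t"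
      by (rule tendsto_eventually)
  qed (auto simp: incseq_def le_fun_def split: split_indicator)
  then have "(\<integral>\<^sup>+ t. ?fR t \<partial>lborel) = (\<integral>\<^sup>+ t. (SUP i. ?f i t) \<partial>lborel)"
    by simp
  also have "\<dots> = (SUP i. (\<integral>\<^sup>+ t. ?f i t \<partial>lborel))"
    by (rule nn_integral_monotone_convergence_SUP) (auto simp: incseq_def le_fun_def split: split_indicator)
  also have "\<dots> \<le> ennreal x"
  proof (rule SUP_least)
    fix i :: nat
    have "(\<integral>\<^sup>+ t. ?f i t \<partial>lborel) = ennreal (LBINT t=0..real i. \<gamma> t)"
      by (rule nn_LBINT[symmetric]) (use si nn in auto)
    also have "\<dots> \<le> ennreal x" using bd[of "real i"] by (simp add: ennreal_leI)
    finally show "(\<integral>\<^sup>+ t. ?f i t \<partial>lborel) \<le> ennreal x" .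
  qed
  finally show ?thesis .
qed

lemma I_finite:
  fixes \<gamma> :: "real \<Rightarrow> real"
  assumes "a > 0" "c + l > 0" "l > 0"
  shows "(\<integral>\<^sup>+ s. ennreal (l * exp (- (c + l) * s - a * (LBINT t=0..s. \<gamma> t powr k))) * indicator {0..} s \<partial>lborel) < \<infinity>"
proof -
  have "(\<integral>\<^sup>+ s. ennreal (l * exp (- (c + l) * s - a * (LBINT t=0..s. \<gamma> t powr k))) * indicator {0..} s \<partial>lborel)
      \<le> (\<integral>\<^sup>+ s. ennreal (l * exp (- (c + l) * s)) * indicator {0..} s \<partial>lborel)"
  proof (intro nn_integral_mono)
    fix s :: real
    show "ennreal (l * exp (- (c + l) * s - a * (LBINT t=0..s. \<gamma> t powr k))) * indicator {0..} s
        \<le> ennreal (l * exp (- (c + l) * s)) * indicator {0..} s"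
    proof (cases "0 \<le> s")
      case True
      then have "0 \<le> a * (LBINT t=0..s. \<gamma> t powr k)" using G_nonneg assms by simp
      then have "l * exp (- (c + l) * s - a * (LBINT t=0..s. \<gamma> t powr k)) \<le> l * exp (- (c + l) * s)"
        using assms by simp
      then show ?thesis by (intro mult_right_mono ennreal_leI) auto
    qed simp
  qed
  also have "\<dots> = ennreal (0 - (- l / (c + l) * exp (- (c + l) * 0)))"
  proof (rule nn_integral_FTC_atLeast)
    show "(\<lambda>s. l * exp (- (c + l) * s)) \<in> borel_measurable borel" by measurable
    fix x :: real
    show "((\<lambda>s. - l / (c + l) * exp (- (c + l) * s)) has_real_derivative l * exp (- (c + l) * x)) (at x)"
    proof -
      have "((\<lambda>s. exp (- (c + l) * s)) has_real_derivative exp (- (c + l) * x) * (- (c + l))) (at x)"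
        by (rule DERIV_chain2[OF DERIV_exp]) (rule derivative_eq_intros refl | simp)+
      then have "((\<lambda>s. - l / (c + l) * exp (- (c + l) * s)) has_real_derivative - l / (c + l) * (exp (- (c + l) * x) * (- (c + l)))) (at x)"
        by (rule DERIV_cmult)
      moreover have "- l / (c + l) * (exp (- (c + l) * x) * (- (c + l))) = l * exp (- (c + l) * x)"
        using assms by (simp add: field_simps)
      ultimately show ?thesis by simp
    qed
    show "0 \<le> l * exp (- (c + l) * x)" using assms by simp
  next
    have "filterlim (\<lambda>t. (c + l) * t) at_top at_top"
      by (rule filterlim_tendsto_pos_mult_at_top[OF tendsto_const assms(2) filterlim_ident])
    then have "filterlim (\<lambda>t. - ((c + l) * t)) at_bot at_top"
      by (simp add: filterlim_uminus_at_bot)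
    then have "((\<lambda>t. exp (- ((c + l) * t))) \<longlongrightarrow> 0) at_top"
      by (rule filterlim_compose[OF exp_at_bot])
    then have "((\<lambda>t. - l / (c + l) * exp (- ((c + l) * t))) \<longlongrightarrow> - l / (c + l) * 0) at_top"
      by (intro tendsto_mult tendsto_const)
    then show "((\<lambda>s. - l / (c + l) * exp (- (c + l) * s)) \<longlongrightarrow> 0) at_top"
      by (simp only: mult_minus_left mult_zero_right)
  qed
  finally show ?thesis by (auto simp: less_top[symmetric] top_unique)
qed

context opt begin

lemma D_pos: "D > 0" unfolding D_def using a l rho z0 z1 A_pos by simp

lemma young: assumes "0 \<le> t" "0 \<le> g" shows "g powr k * gs t powr (1 - k) \<le> k * g + (1 - k) * gs t"
proof (cases "g = 0")
  case True then show ?thesis using gs_pos[OF assms(1)] k1 by simp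
next
  case False
  then show ?thesis using Youngs_inequality_0[of k "1 - k" g "gs t"] gs_pos[OF assms(1)] assms k0 k1 by simp
qed

lemma opt_bound:
  fixes \<gamma> :: "real \<Rightarrow> real"
  assumes adm: "admissible (X 0) \<gamma>"
  shows "ennreal (Hs 0) \<le> (\<integral>\<^sup>+ s. ennreal (l * exp (- (c + l) * s - a * (LBINT t=0..s. \<gamma> t powr k))) * indicator {0..} s \<partial>lborel)"
proof -
  have m[measurable]: "\<gamma> \<in> borel_measurable borel" and nn: "\<And>t. 0 \<le> t \<Longrightarrow> 0 \<le> \<gamma> t"
    and si: "\<And>s. 0 \<le> s \<Longrightarrow> set_integrable lborel {0..s} \<gamma>"
    using adm unfolding admissible_def by auto
  define G where "G s = (LBINT t=0..s. \<gamma> t powr k)" for s :: real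
  have mG[measurable]: "G \<in> borel_measurable borel" unfolding G_def[abs_def]
    by (rule meas_LBINT) simp
  have mGs[measurable]: "Gs \<in> borel_measurable borel" unfolding Gs_def[abs_def] zt_def[abs_def] by measurable
  define q1 where "q1 t = a * \<gamma> t powr k" for t
  define q2 where "q2 t = a * gsF t powr k" for t
  have [measurable]: "q1 \<in> borel_measurable borel" unfolding q1_def[abs_def] by measurable
  have [measurable]: "q2 \<in> borel_measurable borel" unfolding q2_def[abs_def] by measurable
  have si1: "set_integrable lborel {0..s} q1" if "0 \<le> s" for s
    unfolding q1_def using powk_setint[OF m nn si[OF that] k0 k1] by (rule set_integrable_mult_right)
  have si2: "set_integrable lborel {0..s} q2" if "0 \<le> s" for s
    unfolding q2_def using powk_setint[OF gsF_meas gsF_nonneg gsF_setint k0 k1] by (rule set_integrable_mult_right)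
  have L1: "(LBINT t=0..s. q1 t) = a * G s" for s :: real unfolding q1_def G_def by simp
  have L2: "(LBINT t=0..s. q2 t) = a * Gs s" if "0 \<le> s" for s :: real unfolding q2_def using Gs_LBINT[OF that] by simp
  have [measurable]: "(\<lambda>s::real. LBINT t=0..s. q1 t) \<in> borel_measurable borel"
    by (rule meas_LBINT) (simp add: q1_def)
  have [measurable]: "(\<lambda>s::real. LBINT t=0..s. q2 t) \<in> borel_measurable borel"
    by (rule meas_LBINT) (simp add: q2_def)
  have [measurable]: "{0::real..} \<in> sets borel" by simp
  define I where "I = (\<integral>\<^sup>+ s. ennreal (l * exp (- (c + l) * s - a * G s)) * indicator {0..} s \<partial>lborel)"
  define T1 where "T1 = (\<integral>\<^sup>+ s. ennreal (l * P s * (LBINT t=0..s. q1 t)) * indicator {0..} s \<partial>lborel)"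
  define T2 where "T2 = (\<integral>\<^sup>+ s. ennreal (l * P s * (LBINT t=0..s. q2 t)) * indicator {0..} s \<partial>lborel)"
  define Istar where "Istar = (\<integral>\<^sup>+ s. ennreal (l * P s) * indicator {0..} s \<partial>lborel)"
  have Istar: "Istar = ennreal (Hs 0)" unfolding Istar_def using P_nn[of 0] by simp
  have "Istar + T2 = (\<integral>\<^sup>+ s. ennreal (l * P s + l * P s * (a * Gs s)) * indicator {0..} s \<partial>lborel)"
  proof -
    have "(\<integral>\<^sup>+ s. ennreal (l * P s + l * P s * (a * Gs s)) * indicator {0..} s \<partial>lborel)
      = (\<integral>\<^sup>+ s. ennreal (l * P s) * indicator {0..} s + ennreal (l * P s * (LBINT t=0..s. q2 t)) * indicator {0..} s \<partial>lborel)"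
    proof (intro nn_integral_cong)
      fix s :: real
      show "ennreal (l * P s + l * P s * (a * Gs s)) * indicator {0..} s
          = ennreal (l * P s) * indicator {0..} s + ennreal (l * P s * (LBINT t=0..s. q2 t)) * indicator {0..} s"
      proof (cases "0 \<le> s")
        case True
        have "0 \<le> Gs s" using True G_nonneg[OF True, of gsF k] Gs_LBINT[OF True] by simp
        then have n2: "0 \<le> l * P s * (a * Gs s)" using P_pos[OF True] l a by simp
        have n1: "0 \<le> l * P s" using P_pos[OF True] l by simp
        show ?thesis using True L2[OF True] ennreal_plus[OF n1 n2] by simp
      qed simp
    qed
    also have "\<dots> = Istar + T2" unfolding Istar_def T2_def
      by (rule nn_integral_add) measurable
    finally show ?thesis by simp
  qed
  also have "\<dots> \<le> (\<integral>\<^sup>+ s. ennreal (l * exp (- (c + l) * s - a * G s) + l * P s * (a * G s)) * indicator {0..} s \<partial>lborel)"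
  proof (intro nn_integral_mono)
    fix s :: real
    show "ennreal (l * P s + l * P s * (a * Gs s)) * indicator {0..} s
        \<le> ennreal (l * exp (- (c + l) * s - a * G s) + l * P s * (a * G s)) * indicator {0..} s"
    proof (cases "0 \<le> s")
      case True
      have Pe: "P s = exp (- rho * s - a * Gs s)" using P_eq[OF True] by simp
      have "exp (- (c + l) * s - a * G s) = P s * exp (a * Gs s - a * G s)"
        unfolding Pe rho_def by (simp flip: exp_add)
      also have "\<dots> \<ge> P s * (1 + (a * Gs s - a * G s))"
        using P_pos[OF True] exp_ge_add_one_self by (intro mult_left_mono) auto
      finally have "l * P s * (1 + (a * Gs s - a * G s)) \<le> l * exp (- (c + l) * s - a * G s)"
        using l by (simp add: mult.assoc)
      then have "l * P s + l * P s * (a * Gs s) \<le> l * exp (- (c + l) * s - a * G s) + l * P s * (a * G s)"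
        by (simp add: algebra_simps)
      then show ?thesis by (intro mult_right_mono ennreal_leI) auto
    qed simp
  qed
  also have "\<dots> = I + T1"
  proof -
    have "(\<integral>\<^sup>+ s. ennreal (l * exp (- (c + l) * s - a * G s) + l * P s * (a * G s)) * indicator {0..} s \<partial>lborel)
      = (\<integral>\<^sup>+ s. ennreal (l * exp (- (c + l) * s - a * G s)) * indicator {0..} s + ennreal (l * P s * (LBINT t=0..s. q1 t)) * indicator {0..} s \<partial>lborel)"
    proof (intro nn_integral_cong)
      fix s :: real
      show "ennreal (l * exp (- (c + l) * s - a * G s) + l * P s * (a * G s)) * indicator {0..} s
          = ennreal (l * exp (- (c + l) * s - a * G s)) * indicator {0..} s + ennreal (l * P s * (LBINT t=0..s. q1 t)) * indicator {0..} s"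
      proof (cases "0 \<le> s")
        case True
        have "0 \<le> G s" unfolding G_def using G_nonneg[OF True] by simp
        then have n2: "0 \<le> l * P s * (a * G s)" using P_pos[OF True] l a by simp
        have n1: "0 \<le> l * exp (- (c + l) * s - a * G s)" using l by simp
        show ?thesis using True L1 ennreal_plus[OF n1 n2] by simp
      qed simp
    qed
    also have "\<dots> = I + T1" unfolding I_def T1_def
      by (rule nn_integral_add) measurable
    finally show ?thesis .
  qed
  finally have main: "Istar + T2 \<le> I + T1" .
  have "T1 = (\<integral>\<^sup>+ t. ennreal (q1 t * Hs t) * indicator {0..} t \<partial>lborel)"
    unfolding T1_def
    by (rule tonelli[OF _ _ si1]) (auto simp: q1_def a less_imp_le)
  also have "\<dots> \<le> (\<integral>\<^sup>+ t. (ennreal (D * k) * (ennreal (\<gamma> t) * indicator {0..} t)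
      + ennreal (D * (1 - k)) * (ennreal (gsF t) * indicator {0..} t)) \<partial>lborel)"
  proof (intro nn_integral_mono)
    fix t :: real
    show "ennreal (q1 t * Hs t) * indicator {0..} t
        \<le> ennreal (D * k) * (ennreal (\<gamma> t) * indicator {0..} t) + ennreal (D * (1 - k)) * (ennreal (gsF t) * indicator {0..} t)"
    proof (cases "0 \<le> t")
      case True
      have "q1 t * Hs t = \<gamma> t powr k * (a * Hs t)" unfolding q1_def by simp
      also have "\<dots> = D * (\<gamma> t powr k * gs t powr (1 - k))" using KKT[OF True] by simp
      also have "\<dots> \<le> D * (k * \<gamma> t + (1 - k) * gs t)"
        using young[OF True nn[OF True]] D_pos by (intro mult_left_mono) auto
      also have "\<dots> = D * k * \<gamma> t + D * (1 - k) * gsF t" using True by (simp add: gsF_def algebra_simps)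
      finally have "ennreal (q1 t * Hs t) \<le> ennreal (D * k * \<gamma> t + D * (1 - k) * gsF t)"
        by (rule ennreal_leI)
      also have "\<dots> = ennreal (D * k) * ennreal (\<gamma> t) + ennreal (D * (1 - k)) * ennreal (gsF t)"
      proof -
        have n1: "0 \<le> D * k * \<gamma> t" "0 \<le> D * (1 - k) * gsF t" "0 \<le> D * k" "0 \<le> D * (1 - k)"
          using D_pos k0 k1 nn[OF True] gsF_nonneg[of t] by simp_all
        show ?thesis using ennreal_plus[OF n1(1,2)] ennreal_mult[OF n1(3) nn[OF True]]
            ennreal_mult[OF n1(4) gsF_nonneg[of t]] by simp
      qed
      finally show ?thesis using True by simp
    qed simp
  qed
  also have "\<dots> = ennreal (D * k) * (\<integral>\<^sup>+ t. ennreal (\<gamma> t) * indicator {0..} t \<partial>lborel)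
      + ennreal (D * (1 - k)) * (\<integral>\<^sup>+ t. ennreal (gsF t) * indicator {0..} t \<partial>lborel)"
    by (subst nn_integral_add) (auto intro!: arg_cong2[where f="(+)"] nn_integral_cmult)
  also have "\<dots> \<le> ennreal (D * k) * ennreal (X 0) + ennreal (D * (1 - k)) * ennreal (X 0)"
    unfolding gsF_nn using nn_gamma_le[OF adm] by (intro add_mono mult_left_mono) auto
  also have "\<dots> = ennreal (D * X 0)"
  proof -
    have n1: "0 \<le> D * k" "0 \<le> D * (1 - k)" "0 \<le> X 0" "0 \<le> D * k * X 0" "0 \<le> D * (1 - k) * X 0"
      using D_pos k0 k1 X_nonneg[of 0] by simp_all
    have "D * X 0 = D * k * X 0 + D * (1 - k) * X 0" by (simp add: algebra_simps)
    then show ?thesis using ennreal_plus[OF n1(4,5)] ennreal_mult[OF n1(1,3)] ennreal_mult[OF n1(2,3)] by simp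
  qed
  finally have T1b: "T1 \<le> ennreal (D * X 0)" .
  have "T2 = (\<integral>\<^sup>+ t. ennreal (q2 t * Hs t) * indicator {0..} t \<partial>lborel)"
    unfolding T2_def
    by (rule tonelli[OF _ _ si2]) (auto simp: q2_def a less_imp_le)
  also have "\<dots> = (\<integral>\<^sup>+ t. ennreal D * (ennreal (gsF t) * indicator {0..} t) \<partial>lborel)"
  proof (intro nn_integral_cong)
    fix t :: real
    show "ennreal (q2 t * Hs t) * indicator {0..} t = ennreal D * (ennreal (gsF t) * indicator {0..} t)"
    proof (cases "0 \<le> t")
      case True
      have "q2 t * Hs t = gs t powr k * (a * Hs t)" unfolding q2_def gsF_def using True by simp
      also have "\<dots> = D * (gs t powr k * gs t powr (1 - k))" using KKT[OF True] by simp
      also have "gs t powr k * gs t powr (1 - k) = gs t"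
        using gs_pos[OF True] by (simp add: powr_add[symmetric])
      finally show ?thesis using True D_pos gs_pos[OF True] by (simp add: gsF_def ennreal_mult)
    qed simp
  qed
  also have "\<dots> = ennreal D * ennreal (X 0)"
    by (subst nn_integral_cmult) (auto simp: gsF_nn)
  also have "\<dots> = ennreal (D * X 0)" using D_pos X_nonneg[of 0] by (simp add: ennreal_mult)
  finally have T2v: "T2 = ennreal (D * X 0)" .
  have "Istar + ennreal (D * X 0) \<le> I + ennreal (D * X 0)"
    using main T1b T2v by (metis add_left_mono order_trans)
  then have "Istar \<le> I"
    by (simp add: ennreal_add_left_cancel_le add.commute)
  then show ?thesis unfolding Istar I_def G_def .
qed

end

context opt begin

lemma gsF_adm: "admissible (X 0) gsF"
proof -
  have "gsF \<in> borel_measurable borel" by measurable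
  moreover have "0 \<le> X 0 - (LBINT s=0..t. gsF s)" if t: "0 \<le> t" for t :: ereal
  proof (cases t)
    case (real r)
    then have "0 \<le> r" using t by simp
    then show ?thesis using gsF_LBINT[of r] X_nonneg[of r] real by simp
  next
    case PInf
    have "(LBINT s=0..t. gsF s) = (\<integral>s. indicator {0<..} s * gsF s \<partial>lborel)"
      using PInf by (simp add: interval_lebesgue_integral_def set_lebesgue_integral_def einterval_def zero_ereal_def greaterThan_def)
    also have "\<dots> = enn2real (\<integral>\<^sup>+ s. ennreal (indicator {0<..} s * gsF s) \<partial>lborel)"
      by (rule integral_eq_nn_integral) (auto simp: gsF_nonneg)
    also have "\<dots> \<le> enn2real (\<integral>\<^sup>+ s. ennreal (gsF s) * indicator {0..} s \<partial>lborel)"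
    proof (rule enn2real_mono)
      show "(\<integral>\<^sup>+ s. ennreal (indicator {0<..} s * gsF s) \<partial>lborel) \<le> (\<integral>\<^sup>+ s. ennreal (gsF s) * indicator {0..} s \<partial>lborel)"
        by (intro nn_integral_mono) (auto split: split_indicator)
      show "(\<integral>\<^sup>+ s. ennreal (gsF s) * indicator {0..} s \<partial>lborel) < top" unfolding gsF_nn by simp
    qed
    also have "\<dots> = X 0" unfolding gsF_nn using X_nonneg[of 0] by simp
    finally show ?thesis by simp
  next
    case MInf
    then show ?thesis using t by simp
  qed
  ultimately show ?thesis unfolding admissible_def using gsF_nonneg gsF_setint by auto
qed

lemma obj_gsF: "objective a k c l gsF = - Hs 0"
proof -
  have "objective a k c l gsF = - enn2real (\<integral>\<^sup>+ s. ennreal (l * exp (- (c + l) * s - a * (LBINT t=0..s. gsF t powr k))) * indicator {0..} s \<partial>lborel)"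
    by (rule objective_eq[OF gsF_adm k0 k1 l])
  also have "(\<integral>\<^sup>+ s. ennreal (l * exp (- (c + l) * s - a * (LBINT t=0..s. gsF t powr k))) * indicator {0..} s \<partial>lborel)
      = (\<integral>\<^sup>+ s. ennreal (l * P s) * indicator {0..} s \<partial>lborel)"
  proof (intro nn_integral_cong)
    fix s :: real
    show "ennreal (l * exp (- (c + l) * s - a * (LBINT t=0..s. gsF t powr k))) * indicator {0..} s
        = ennreal (l * P s) * indicator {0..} s"
    proof (cases "0 \<le> s")
      case True
      then show ?thesis using Gs_LBINT[OF True] P_eq[OF True] by (simp add: rho_def)
    qed simp
  qed
  also have "\<dots> = ennreal (Hs 0)" using P_nn[of 0] by simp
  finally show ?thesis using Hs_nonneg[of 0] by simp
qed

lemma obj_le: "admissible (X 0) \<gamma> \<Longrightarrow> objective a k c l \<gamma> \<le> - Hs 0"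
proof -
  assume adm: "admissible (X 0) \<gamma>"
  define I where "I = (\<integral>\<^sup>+ s. ennreal (l * exp (- (c + l) * s - a * (LBINT t=0..s. \<gamma> t powr k))) * indicator {0..} s \<partial>lborel)"
  have o: "objective a k c l \<gamma> = - enn2real I" unfolding I_def by (rule objective_eq[OF adm k0 k1 l])
  have fin: "I < \<infinity>" unfolding I_def by (rule I_finite[OF a cl l])
  have ge: "ennreal (Hs 0) \<le> I" unfolding I_def by (rule opt_bound[OF adm])
  have "I = ennreal (enn2real I)" using fin by (simp add: less_top)
  then have "Hs 0 \<le> enn2real I" using ge Hs_nonneg[of 0]
    by (metis enn2real_nonneg ennreal_le_iff)
  then show ?thesis using o by simp
qed

lemma vhat_eq: "vhat a k c l (X 0) = - Hs 0"
  unfolding vhat_def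
proof (rule cSup_eq_maximum)
  show "- Hs 0 \<in> objective a k c l ` {\<gamma>. admissible (X 0) \<gamma>}"
    using gsF_adm obj_gsF by (intro image_eqI[where x=gsF]) auto
qed (use obj_le in auto)

lemma gs_formula:
  assumes t: "0 \<le> t"
  shows "(1 - k) powr (- 1 / k) * a powr (- 1 / k) * l powr (- 1 / k) * (c + l) powr (1 / k)
     * ((l * z0) * exp (k * t * (c + l) / (k - 1))) powr (1 / k)
     * (1 - (l * z0) * exp (k * t * (c + l) / (k - 1)) / l) powr (- 1 / k) = gs t"
proof -
  have e: "z0 * exp (k * t * (c + l) / (k - 1)) = zt t"
  proof -
    have "k * t * (c + l) / (k - 1) = - beta * t"
      unfolding beta_def rho_def using k1 by (simp add: field_simps)
    then show ?thesis by (simp add: zt_def)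
  qed
  have mb: "- 1 / k = - b" by (simp add: b_def)
  have b': "1 / k = b" by (simp add: b_def)
  have e1: "(l * z0) * exp (k * t * (c + l) / (k - 1)) = l * zt t" using e by (simp add: mult.assoc)
  have e3: "1 - l * zt t / l = 1 - zt t" using l by simp
  have e2: "(l * zt t) powr b = l powr b * zt t powr b" using l zt_pos[of t] by (simp add: powr_mult)
  have "(1 - k) powr (- 1 / k) * a powr (- 1 / k) * l powr (- 1 / k) * (c + l) powr (1 / k)
     * ((l * z0) * exp (k * t * (c + l) / (k - 1))) powr (1 / k)
     * (1 - (l * z0) * exp (k * t * (c + l) / (k - 1)) / l) powr (- 1 / k)
     = (1 - k) powr (- b) * a powr (- b) * l powr (- b) * (c + l) powr b * (l powr b * zt t powr b) * (1 - zt t) powr (- b)"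
    unfolding mb b' e1 e2 e3 ..
  also have "\<dots> = (1 - k) powr (- b) * a powr (- b) * rho powr b * zt t powr b * (1 - zt t) powr (- b)"
    using l by (simp add: rho_def powr_minus)
  also have "\<dots> = gs t" using gs_alt[OF t] by (simp add: A_def)
  finally show ?thesis .
qed

lemma final:
  "X 0 = (1 - k) powr (1 - 1 / k) * a powr (- 1 / k) * l powr (- 1 / k)
             * (c + l) powr (1 / k - 1)
             * (vhat a k c l (X 0) * (c + l) + l) powr (1 / k)
             * hyp2F1 (1 / k) (1 / k) (1 + 1 / k) ((l + vhat a k c l (X 0) * (c + l)) / l)
    \<and> (let w0 = c * vhat a k c l (X 0) + l + l * vhat a k c l (X 0);
             \<gamma>s = (\<lambda>t. if t \<ge> 0 then
                  (1 - k) powr (- 1 / k) * a powr (- 1 / k) * l powr (- 1 / k) * (c + l) powr (1 / k)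
                  * (w0 * exp (k * t * (c + l) / (k - 1))) powr (1 / k)
                  * (1 - w0 * exp (k * t * (c + l) / (k - 1)) / l) powr (- 1 / k)
                 else 0)
         in admissible (X 0) \<gamma>s \<and> objective a k c l \<gamma>s = vhat a k c l (X 0))"
proof -
  have w: "vhat a k c l (X 0) * (c + l) + l = l * z0"
    unfolding vhat_eq Hs_0 rho_def using cl by (simp add: field_simps)
  have w0: "c * vhat a k c l (X 0) + l + l * vhat a k c l (X 0) = l * z0"
    using w by (simp add: algebra_simps)
  have g: "(\<lambda>t. if t \<ge> 0 then
                  (1 - k) powr (- 1 / k) * a powr (- 1 / k) * l powr (- 1 / k) * (c + l) powr (1 / k)
                  * ((l * z0) * exp (k * t * (c + l) / (k - 1))) powr (1 / k)
                  * (1 - (l * z0) * exp (k * t * (c + l) / (k - 1)) / l) powr (- 1 / k)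
                 else 0) = gsF"
  proof (rule ext)
    fix t :: real
    show "(if t \<ge> 0 then
                  (1 - k) powr (- 1 / k) * a powr (- 1 / k) * l powr (- 1 / k) * (c + l) powr (1 / k)
                  * ((l * z0) * exp (k * t * (c + l) / (k - 1))) powr (1 / k)
                  * (1 - (l * z0) * exp (k * t * (c + l) / (k - 1)) / l) powr (- 1 / k)
                 else 0) = gsF t"
      using gs_formula[of t] by (simp add: gsF_def)
  qed
  have part2: "admissible (X 0) gsF \<and> objective a k c l gsF = vhat a k c l (X 0)"
    using gsF_adm obj_gsF vhat_eq by simp
  have "(1 - k) powr (1 - 1 / k) * a powr (- 1 / k) * l powr (- 1 / k)
             * (c + l) powr (1 / k - 1)
             * (vhat a k c l (X 0) * (c + l) + l) powr (1 / k)
             * hyp2F1 (1 / k) (1 / k) (1 + 1 / k) ((l + vhat a k c l (X 0) * (c + l)) / l)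
      = C * (l powr (- b) * l powr b) * z0 powr b * Fh b z0"
  proof -
    have "(l + vhat a k c l (X 0) * (c + l)) / l = z0" using w l by (simp add: add.commute)
    moreover have "(l * z0) powr b = l powr b * z0 powr b" using l z0 by (simp add: powr_mult)
    moreover have "- 1 / k = - b" "1 / k = b" "1 / k - 1 = b - 1" "1 - 1 / k = 1 - b" by (simp_all add: b_def)
    ultimately show ?thesis unfolding w Fh_hyp[symmetric] C_def rho_def by (simp only: ac_simps)
  qed
  also have "\<dots> = X 0" using l by (simp add: powr_add[symmetric] X_0 Phi_def)
  finally show ?thesis using part2 w0 g by (simp add: Let_def)
qed

end

lemma exists_opt:
  fixes a k c l x :: real
  assumes "a > 0" and "0 < k" and "k < 1" and "l > 0" and "c + l > 0" and "x > 0"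
  shows "\<exists>z0. opt a k c l z0 \<and> opt.X a k c l z0 0 = x"
proof -
  define C1 where "C1 = (1-k) powr (1 - 1/k) * a powr (- (1/k)) * (c + l) powr (1/k - 1)"
  have C1: "C1 > 0" unfolding C1_def using assms by simp
  have "1/k \<ge> 1" using assms by simp
  then obtain z0 where z: "0 < z0" "z0 < 1" "Phi (1/k) z0 = x / C1"
    using Phi_surj[of "1/k" "x / C1"] C1 assms by auto
  interpret opt a k c l z0 using assms z by unfold_locales auto
  have CC: "C = C1" unfolding C_def C1_def b_def rho_def by simp
  have "X 0 = C1 * (x / C1)" unfolding X_0 CC using z by (simp add: b_def)
  then have "X 0 = x" using C1 by simp
  then show ?thesis using opt_axioms by blast
qed

theorem mainTheorem1:
  fixes a k c l x :: real
  assumes "a > 0" and "0 < k" and "k < 1" and "l > 0" and "c + l > 0" and "x > 0"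
  shows "x = (1 - k) powr (1 - 1 / k) * a powr (- 1 / k) * l powr (- 1 / k)
             * (c + l) powr (1 / k - 1)
             * (vhat a k c l x * (c + l) + l) powr (1 / k)
             * hyp2F1 (1 / k) (1 / k) (1 + 1 / k) ((l + vhat a k c l x * (c + l)) / l)
    \<and> (let w0 = c * vhat a k c l x + l + l * vhat a k c l x;
             \<gamma>s = (\<lambda>t. if t \<ge> 0 then
                  (1 - k) powr (- 1 / k) * a powr (- 1 / k) * l powr (- 1 / k) * (c + l) powr (1 / k)
                  * (w0 * exp (k * t * (c + l) / (k - 1))) powr (1 / k)
                  * (1 - w0 * exp (k * t * (c + l) / (k - 1)) / l) powr (- 1 / k)
                 else 0)
         in admissible x \<gamma>s \<and> objective a k c l \<gamma>s = vhat a k c l x)"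
proof -
  obtain z0 where o: "opt a k c l z0" and x: "opt.X a k c l z0 0 = x"
    using exists_opt[OF assms] by blast
  show ?thesis using opt.final[OF o] unfolding x .
qed

end
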